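(* Let $\gamma>0$, let $S=(S_1,\ldots,S_n)$ be nonnegative (positive semi-definite) nonzero symmetric $p\times p$ matrices, and let $f:\mathcal D_n^+\to\mathcal D_n^+$ be a stable mapping with Lipschitz parameter $\lambda_f$ for $d_s$ (i.e. $d_s(f(\Delta),f(\Delta'))\le\lambda_f d_s(\Delta,\Delta')$ for all $\Delta,\Delta'$). If $f$ is bounded from above (there is $f_0$ with $f(\Delta)\le f_0$ for all $\Delta$) or $\lambda_f<1$, then the equation $\Delta=I^S(f(\Delta))$ admits a unique solution $\Delta\in\mathcal D_n^+$.
   Context: $\mathcal D_n^+$ is the set of $n\times n$ diagonal matrices with positive diagonal entries; $d_s(\Delta,\Delta')=\max_i\frac{|\Delta_i-\Delta'_i|}{\sqrt{\Delta_i\Delta'_i}}$; $f$ is stable if it is $1$-Lipschitz for $d_s$. For $\Delta\in\mathcal D_n^+$, $Q_\gamma(S,\Delta)=\big(\frac1n\sum_{i=1}^n\Delta_iS_i+\gamma I_p\big)^{-1}$ and $I^S(\Delta)=\mathrm{diag}\big(\frac1n\operatorname{tr}(S_iQ_\gamma(S,\Delta))\big)_{1\le i\le n}$. *)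

theory Defs
  imports "HOL-Analysis.Analysis"
begin

text \<open>A diagonal matrix Delta in D_n^+ is represented by its diagonal vector,
  indexed by the finite type 'n (n = CARD('n)).\<close>

definition posdiag :: "real^'n \<Rightarrow> bool" where
  "posdiag D \<longleftrightarrow> (\<forall>i. 0 < D $ i)"

definition d_s :: "real^'n::finite \<Rightarrow> real^'n \<Rightarrow> real" where
  "d_s D D' = Max (range (\<lambda>i. \<bar>D $ i - D' $ i\<bar> / sqrt (D $ i * D' $ i)))"

definition lipschitz_ds :: "real \<Rightarrow> (real^'n::finite \<Rightarrow> real^'n) \<Rightarrow> bool" where
  "lipschitz_ds lam f \<longleftrightarrow>
     (\<forall>D D'. posdiag D \<longrightarrow> posdiag D' \<longrightarrow> d_s (f D) (f D') \<le> lam * d_s D D')"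

definition stable :: "(real^'n::finite \<Rightarrow> real^'n) \<Rightarrow> bool" where
  "stable f \<longleftrightarrow> lipschitz_ds 1 f"

definition psd_matrix :: "real^'p^'p \<Rightarrow> bool" where
  "psd_matrix A \<longleftrightarrow> (\<forall>x. 0 \<le> x \<bullet> (A *v x))"

definition symmetric_matrix :: "real^'p^'p \<Rightarrow> bool" where
  "symmetric_matrix A \<longleftrightarrow> transpose A = A"

definition Q_gamma :: "real \<Rightarrow> ('n::finite \<Rightarrow> real^'p^'p) \<Rightarrow> real^'n \<Rightarrow> real^'p^'p" where
  "Q_gamma \<gamma> S D =
     matrix_inv ((1 / real CARD('n)) *\<^sub>R (\<Sum>i\<in>UNIV. (D $ i) *\<^sub>R S i) + \<gamma> *\<^sub>R mat 1)"

definition I_S :: "real \<Rightarrow> ('n::finite \<Rightarrow> real^'p::finite^'p) \<Rightarrow> real^'n \<Rightarrow> real^'n" where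
  "I_S \<gamma> S D = (\<chi> i. (1 / real CARD('n)) * trace (S i ** Q_gamma \<gamma> S D))"

end

theory Submission
  imports Defs
begin

lemma sym_dot:
  fixes A :: "real^'p^'p"
  assumes "transpose A = A"
  shows "x \<bullet> (A *v y) = (A *v x) \<bullet> y"
  by (metis assms dot_lmul_matrix transpose_matrix_vector)

lemma eig_step:
  fixes A :: "real^'p::finite^'p"
  assumes sym: "transpose A = A" and fB: "finite B" and cB: "card B < CARD('p)"
    and eB: "\<forall>b\<in>B. \<exists>l. A *v b = l *\<^sub>R b"
  shows "\<exists>v. norm v = 1 \<and> (\<forall>b\<in>B. v \<bullet> b = 0) \<and> (\<exists>l. A *v v = l *\<^sub>R v)"
proof -
  define W where "W = {x::real^'p. \<forall>b\<in>B. x \<bullet> b = 0}"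
  have subW: "subspace W" unfolding W_def subspace_def
    by (auto simp: inner_add_left)
  have dB: "dim B < DIM(real^'p)"
    using dim_le_card[of B B] fB cB by (simp add: span_superset)
  then obtain x0 where x0: "x0 \<noteq> 0" "\<And>y. y \<in> span B \<Longrightarrow> orthogonal x0 y"
    using orthogonal_to_subspace_exists[OF dB] by metis
  have x0W: "x0 \<in> W" using x0(2)[OF span_base] unfolding W_def orthogonal_def by blast
  define K where "K = W \<inter> sphere 0 1"
  have "closed W" using subW closed_subspace by blast
  hence cK: "compact K" unfolding K_def by (simp add: closed_Int_compact)
  have "x0 /\<^sub>R norm x0 \<in> K" using subspace_scale[OF subW x0W] x0 unfolding K_def
    by simp
  hence neK: "K \<noteq> {}" by blast
  have contq: "continuous_on K (\<lambda>x. x \<bullet> (A *v x))"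
    by (intro continuous_intros)
  obtain v where vK: "v \<in> K" and vmax: "\<And>y. y \<in> K \<Longrightarrow> y \<bullet> (A *v y) \<le> v \<bullet> (A *v v)"
    using continuous_attains_sup[OF cK neK contq] by blast
  define l where "l = v \<bullet> (A *v v)"
  define w where "w = A *v v - l *\<^sub>R v"
  have vW: "v \<in> W" and nv: "norm v = 1" using vK unfolding K_def by auto
  have vv: "v \<bullet> v = 1" using nv by (simp add: dot_square_norm)
  have wW: "w \<in> W"
  proof -
    have Avb: "(A *v v) \<bullet> b = 0" if bB: "b \<in> B" for b
    proof -
      obtain lb where lb: "A *v b = lb *\<^sub>R b" using eB bB by blast
      have "(A *v v) \<bullet> b = v \<bullet> (A *v b)" using sym_dot[OF sym, of v b] by argo
      also have "\<dots> = lb * (v \<bullet> b)" using lb by simp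
      finally have "(A *v v) \<bullet> b = lb * (v \<bullet> b)" .
      moreover have "v \<bullet> b = 0" using vW bB unfolding W_def by blast
      ultimately show ?thesis by simp
    qed
    have "w \<bullet> b = 0" if "b \<in> B" for b
    proof -
      have "w \<bullet> b = (A *v v) \<bullet> b - l * (v \<bullet> b)" unfolding w_def by (simp add: inner_diff_left)
      thus ?thesis using Avb[OF that] vW that unfolding W_def by simp
    qed
    thus ?thesis unfolding W_def by blast
  qed
  have wv: "w \<bullet> v = 0"
  proof -
    have "w \<bullet> v = (A *v v) \<bullet> v - l * (v \<bullet> v)" unfolding w_def by (simp add: inner_diff_left)
    also have "(A *v v) \<bullet> v = l" unfolding l_def by (rule inner_commute)
    finally show ?thesis using vv by simp
  qed
  have vAw: "v \<bullet> (A *v w) = w \<bullet> w"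
  proof -
    have "v \<bullet> (A *v w) = (A *v v) \<bullet> w" by (rule sym_dot[OF sym])
    also have "A *v v = w + l *\<^sub>R v" unfolding w_def by simp
    finally have "v \<bullet> (A *v w) = w \<bullet> w + l * (v \<bullet> w)" by (simp add: inner_add_left)
    moreover have "v \<bullet> w = 0" using wv by (simp add: inner_commute[of v w])
    ultimately show ?thesis by simp
  qed
  have wAv: "w \<bullet> (A *v v) = w \<bullet> w"
    using vAw sym_dot[OF sym, of v w] inner_commute[of w "A *v v"] by simp
  have key: "2 * t * (w \<bullet> w) \<le> t^2 * (l * (w \<bullet> w) - w \<bullet> (A *v w))" for t :: real
  proof -
    define y where "y = v + t *\<^sub>R w"
    have yW: "y \<in> W" unfolding y_def using vW wW subW
      by (simp add: subspace_add subspace_scale)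
    have yy: "y \<bullet> y = 1 + t^2 * (w \<bullet> w)" unfolding y_def using vv wv
      by (simp add: inner_add_left inner_add_right inner_commute power2_eq_square)
    hence "0 < y \<bullet> y" by (simp add: add_pos_nonneg)
    hence ypos: "norm y > 0" by simp
    have "y /\<^sub>R norm y \<in> K" unfolding K_def using yW subW ypos by (simp add: subspace_scale)
    hence "(y /\<^sub>R norm y) \<bullet> (A *v (y /\<^sub>R norm y)) \<le> l" using vmax l_def by blast
    moreover have "(y /\<^sub>R norm y) \<bullet> (A *v (y /\<^sub>R norm y)) = (y \<bullet> (A *v y)) / (norm y)^2"
      by (simp add: matrix_vector_mult_scaleR power2_eq_square divide_inverse)
    ultimately have "(y \<bullet> (A *v y)) / (norm y)^2 \<le> l" by simp
    hence "y \<bullet> (A *v y) \<le> l * (y \<bullet> y)" using ypos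
      by (simp add: divide_le_eq dot_square_norm)
    moreover have "y \<bullet> (A *v y) = l + 2 * t * (w \<bullet> w) + t^2 * (w \<bullet> (A *v w))"
      unfolding y_def using vAw wAv l_def
      by (simp add: matrix_vector_mult_scaleR matrix_vector_right_distrib inner_add_left inner_add_right power2_eq_square algebra_simps)
    ultimately show ?thesis using yy by (simp add: algebra_simps)
  qed
  have "w \<bullet> w \<le> 0"
  proof (cases "l * (w \<bullet> w) - w \<bullet> (A *v w) \<le> 0")
    case True
    thus ?thesis using key[of 1] by simp
  next
    case False
    define C where "C = l * (w \<bullet> w) - w \<bullet> (A *v w)"
    have C: "C > 0" using False C_def by simp
    have "2 * (w \<bullet> w / C) * (w \<bullet> w) \<le> (w \<bullet> w / C)^2 * C" using key[of "w \<bullet> w / C"] C_def by simp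
    hence "2 * (w \<bullet> w)^2 / C \<le> (w \<bullet> w)^2 / C" using C by (simp add: power2_eq_square field_simps)
    hence "(w \<bullet> w)^2 \<le> 0" using C by (simp add: divide_le_cancel)
    thus ?thesis by simp
  qed
  hence "w = 0" by (metis antisym inner_ge_zero inner_eq_zero_iff)
  hence "A *v v = l *\<^sub>R v" unfolding w_def by simp
  thus ?thesis using nv vW unfolding W_def by blast
qed


lemma spectral_set:
  fixes A :: "real^'p::finite^'p"
  assumes sym: "transpose A = A"
  shows "k \<le> CARD('p) \<Longrightarrow> \<exists>B. finite B \<and> card B = k \<and> (\<forall>b\<in>B. norm b = 1 \<and> (\<exists>l. A *v b = l *\<^sub>R b))
            \<and> (\<forall>b\<in>B. \<forall>c\<in>B. b \<noteq> c \<longrightarrow> b \<bullet> c = 0)"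
proof (induction k)
  case 0
  show ?case by (rule exI[of _ "{}"]) simp
next
  case (Suc k)
  then obtain B where B: "finite B" "card B = k" "\<forall>b\<in>B. norm b = 1 \<and> (\<exists>l. A *v b = l *\<^sub>R b)"
    "\<forall>b\<in>B. \<forall>c\<in>B. b \<noteq> c \<longrightarrow> b \<bullet> c = 0" by auto
  have "card B < CARD('p)" using Suc.prems B(2) by simp
  then obtain v where v: "norm v = 1" "\<forall>b\<in>B. v \<bullet> b = 0" "\<exists>l. A *v v = l *\<^sub>R v"
    using eig_step[OF sym B(1)] B(3) by blast
  have "v \<notin> B"
  proof
    assume "v \<in> B"
    hence "v \<bullet> v = 0" using v(2) by blast
    thus False using v(1) by simp
  qed
  show ?case
  proof (intro exI[of _ "insert v B"] conjI)
    show "finite (insert v B)" using B(1) by simp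
    show "card (insert v B) = Suc k" using B(1,2) \<open>v \<notin> B\<close> by simp
    show "\<forall>b\<in>insert v B. norm b = 1 \<and> (\<exists>l. A *v b = l *\<^sub>R b)" using B(3) v by auto
    show "\<forall>b\<in>insert v B. \<forall>c\<in>insert v B. b \<noteq> c \<longrightarrow> b \<bullet> c = 0"
      using B(4) v(2) by (auto simp: inner_commute)
  qed
qed

lemma onb_expand:
  fixes B :: "(real^'p::finite) set"
  assumes fB: "finite B" and cB: "card B = CARD('p)" and nB: "\<forall>b\<in>B. norm b = 1"
    and oB: "\<forall>b\<in>B. \<forall>c\<in>B. b \<noteq> c \<longrightarrow> b \<bullet> c = 0"
  shows "x = (\<Sum>b\<in>B. (x \<bullet> b) *\<^sub>R b)"
proof -
  have "0 \<notin> B" using nB by force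
  moreover have "pairwise orthogonal B" using oB unfolding pairwise_def orthogonal_def by blast
  ultimately have ind: "independent B" by (rule pairwise_orthogonal_independent[rotated])
  have "dim (span B) = DIM(real^'p)" using dim_span_eq_card_independent[OF ind] cB by simp
  hence "span B = UNIV" using dim_eq_full by (metis dim_span)
  hence "x \<in> span B" by simp
  then obtain u where u: "x = (\<Sum>b\<in>B. u b *\<^sub>R b)" using span_finite[OF fB] by auto
  have "x \<bullet> c = u c" if "c \<in> B" for c
  proof -
    have "x \<bullet> c = (\<Sum>b\<in>B. u b * (b \<bullet> c))" unfolding u by (simp add: inner_sum_left)
    also have "\<dots> = (\<Sum>b\<in>B. if b = c then u c else 0)"
    proof (rule sum.cong[OF refl])
      fix b assume "b \<in> B"
      thus "u b * (b \<bullet> c) = (if b = c then u c else 0)"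
        using oB that nB by (auto simp: dot_square_norm)
    qed
    also have "\<dots> = u c" using fB that by simp
    finally show ?thesis .
  qed
  thus ?thesis using u by (metis (no_types, lifting) sum.cong)
qed


lemma mat_axis_comp: "((M::real^'p::finite^'p) *v axis j 1) $ i = M $ i $ j"
  by (simp add: matrix_vector_mult_def axis_def if_distrib[of "\<lambda>x. _ * x"] cong: if_cong)

lemma trace_formula:
  fixes S :: "real^'p::finite^'p"
  assumes sym: "transpose S = S"
  obtains B where "finite B" "\<forall>b\<in>B. norm b = 1" "\<forall>b\<in>B. S *v b = (b \<bullet> (S *v b)) *\<^sub>R b"
    "\<And>X. trace (S ** X) = (\<Sum>b\<in>B. (b \<bullet> (S *v b)) * (b \<bullet> (X *v b)))"
    "\<And>x. S *v x = (\<Sum>b\<in>B. ((x \<bullet> b) * (b \<bullet> (S *v b))) *\<^sub>R b)"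
proof -
  obtain B where fB: "finite B" and cB: "card B = CARD('p)" and nB: "\<forall>b\<in>B. norm b = 1"
    and eB: "\<forall>b\<in>B. \<exists>l. S *v b = l *\<^sub>R b" and oB: "\<forall>b\<in>B. \<forall>c\<in>B. b \<noteq> c \<longrightarrow> b \<bullet> c = 0"
    using spectral_set[OF sym, of "CARD('p)"] by blast
  define l where "l b = b \<bullet> (S *v b)" for b
  have Sb: "S *v b = l b *\<^sub>R b" if bB: "b \<in> B" for b
  proof -
    obtain c where c: "S *v b = c *\<^sub>R b" using eB bB by blast
    have "l b = c * (b \<bullet> b)" unfolding l_def c by simp
    also have "b \<bullet> b = 1" using nB bB by (simp add: dot_square_norm)
    finally show ?thesis using c by simp
  qed
  have Sx: "S *v x = (\<Sum>b\<in>B. ((x \<bullet> b) * l b) *\<^sub>R b)" for x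
  proof -
    have "S *v x = S *v (\<Sum>b\<in>B. (x \<bullet> b) *\<^sub>R b)" using onb_expand[OF fB cB nB oB, of x] by simp
    also have "\<dots> = (\<Sum>b\<in>B. (x \<bullet> b) *\<^sub>R (S *v b))"
      by (simp add: linear_sum[OF matrix_vector_mul_linear] o_def matrix_vector_mult_scaleR)
    also have "\<dots> = (\<Sum>b\<in>B. ((x \<bullet> b) * l b) *\<^sub>R b)"
      by (rule sum.cong[OF refl]) (simp add: Sb)
    finally show ?thesis .
  qed
  have tr: "trace (S ** X) = (\<Sum>b\<in>B. l b * (b \<bullet> (X *v b)))" for X
  proof -
    have "trace (S ** X) = (\<Sum>i\<in>UNIV. (S *v (X *v axis i 1)) $ i)"
      unfolding trace_def by (simp add: matrix_vector_mul_assoc mat_axis_comp)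
    also have "\<dots> = (\<Sum>i\<in>UNIV. \<Sum>b\<in>B. ((X *v axis i 1) \<bullet> b) * l b * b $ i)"
      by (simp add: Sx)
    also have "\<dots> = (\<Sum>b\<in>B. l b * (\<Sum>i\<in>UNIV. ((X *v axis i 1) \<bullet> b) * b $ i))"
      by (subst sum.swap) (simp add: sum_distrib_left mult_ac)
    also have "\<dots> = (\<Sum>b\<in>B. l b * (b \<bullet> (X *v b)))"
    proof (rule sum.cong[OF refl])
      fix b
      have "(\<Sum>i\<in>UNIV. ((X *v axis i 1) \<bullet> b) * b $ i) = (\<Sum>i\<in>UNIV. \<Sum>k\<in>UNIV. X $ k $ i * b $ k * b $ i)"
        by (simp add: inner_vec_def mat_axis_comp sum_distrib_right sum_distrib_left mult_ac)
      also have "\<dots> = (\<Sum>k\<in>UNIV. b $ k * (\<Sum>i\<in>UNIV. X $ k $ i * b $ i))"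
        by (subst sum.swap) (simp add: sum_distrib_left mult_ac)
      also have "\<dots> = b \<bullet> (X *v b)"
        by (simp add: inner_vec_def matrix_vector_mult_def)
      finally show "l b * (\<Sum>i\<in>UNIV. ((X *v axis i 1) \<bullet> b) * b $ i) = l b * (b \<bullet> (X *v b))" by simp
    qed
    finally show ?thesis .
  qed
  show ?thesis
  proof (rule that[OF fB nB])
    show "\<forall>b\<in>B. S *v b = (b \<bullet> (S *v b)) *\<^sub>R b" using Sb unfolding l_def by blast
    show "trace (S ** X) = (\<Sum>b\<in>B. (b \<bullet> (S *v b)) * (b \<bullet> (X *v b)))" for X
      using tr[of X] unfolding l_def .
    show "S *v x = (\<Sum>b\<in>B. ((x \<bullet> b) * (b \<bullet> (S *v b))) *\<^sub>R b)" for x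
      using Sx[of x] unfolding l_def .
  qed
qed


lemma trace_nonneg:
  fixes S X :: "real^'p::finite^'p"
  assumes sym: "transpose S = S" and psd: "psd_matrix S" and X: "\<And>x. 0 \<le> x \<bullet> (X *v x)"
  shows "0 \<le> trace (S ** X)"
proof -
  obtain B where "finite B" "\<forall>b\<in>B. norm b = 1" "\<forall>b\<in>B. S *v b = (b \<bullet> (S *v b)) *\<^sub>R b"
    and trg: "\<And>X. trace (S ** X) = (\<Sum>b\<in>B. (b \<bullet> (S *v b)) * (b \<bullet> (X *v b)))"
    and "\<And>x. S *v x = (\<Sum>b\<in>B. ((x \<bullet> b) * (b \<bullet> (S *v b))) *\<^sub>R b)"
    using trace_formula[OF sym] by blast
  note tr = trg[of X]
  have "0 \<le> (\<Sum>b\<in>B. (b \<bullet> (S *v b)) * (b \<bullet> (X *v b)))"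
    by (rule sum_nonneg) (use psd X in \<open>auto simp: psd_matrix_def\<close>)
  thus ?thesis using tr by simp
qed

lemma trace_pos:
  fixes S X :: "real^'p::finite^'p"
  assumes sym: "transpose S = S" and psd: "psd_matrix S" and nz: "S \<noteq> 0"
    and X: "\<And>x. x \<noteq> 0 \<Longrightarrow> 0 < x \<bullet> (X *v x)"
  shows "0 < trace (S ** X)"
proof -
  obtain B where fB: "finite B" and nB: "\<forall>b\<in>B. norm b = 1" and "\<forall>b\<in>B. S *v b = (b \<bullet> (S *v b)) *\<^sub>R b"
    and trg: "\<And>X. trace (S ** X) = (\<Sum>b\<in>B. (b \<bullet> (S *v b)) * (b \<bullet> (X *v b)))"
    and Sx: "\<And>x. S *v x = (\<Sum>b\<in>B. ((x \<bullet> b) * (b \<bullet> (S *v b))) *\<^sub>R b)"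
    using trace_formula[OF sym] by blast
  note tr = trg[of X]
  have "\<exists>b\<in>B. b \<bullet> (S *v b) \<noteq> 0"
  proof (rule ccontr)
    assume "\<not> ?thesis"
    hence "\<forall>b\<in>B. b \<bullet> (S *v b) = 0" by blast
    hence "S *v x = 0 *v x" for x using Sx[of x] by simp
    hence "S = 0" using matrix_eq by blast
    thus False using nz by simp
  qed
  then obtain b0 where b0: "b0 \<in> B" "b0 \<bullet> (S *v b0) \<noteq> 0" by blast
  have b0pos: "0 < b0 \<bullet> (S *v b0)" using b0(2) psd unfolding psd_matrix_def
    by (metis order_le_less)
  have b0n: "b0 \<noteq> 0" using nB b0(1) by force
  have "0 < (\<Sum>b\<in>B. (b \<bullet> (S *v b)) * (b \<bullet> (X *v b)))"
  proof (rule sum_pos2[OF fB b0(1)])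
    show "0 < b0 \<bullet> (S *v b0) * (b0 \<bullet> (X *v b0))" using b0pos X[OF b0n] by simp
    show "\<And>i. i \<in> B \<Longrightarrow> 0 \<le> i \<bullet> (S *v i) * (i \<bullet> (X *v i))"
    proof -
      fix i assume "i \<in> B"
      hence "i \<noteq> 0" using nB by force
      thus "0 \<le> i \<bullet> (S *v i) * (i \<bullet> (X *v i))" using psd X[of i] unfolding psd_matrix_def
        by (simp add: less_imp_le)
    qed
  qed
  thus ?thesis using tr by simp
qed

definition Mm :: "('n::finite \<Rightarrow> real^'p::finite^'p) \<Rightarrow> real^'n \<Rightarrow> real^'p^'p" where
  "Mm S D = (1 / real CARD('n)) *\<^sub>R (\<Sum>i\<in>UNIV. (D $ i) *\<^sub>R S i)"

definition Am :: "real \<Rightarrow> ('n::finite \<Rightarrow> real^'p::finite^'p) \<Rightarrow> real^'n \<Rightarrow> real^'p^'p" where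
  "Am \<gamma> S D = Mm S D + \<gamma> *\<^sub>R mat 1"

lemma Q_Am: "Q_gamma \<gamma> S D = matrix_inv (Am \<gamma> S D)"
  unfolding Q_gamma_def Am_def Mm_def ..

lemma sum_mvm: "(\<Sum>a\<in>A. f a) *v (y::real^'p::finite) = (\<Sum>a\<in>A. f a *v y)"
  by (induction A rule: infinite_finite_induct) (simp_all add: matrix_vector_mult_add_rdistrib)

lemma Mm_form: "x \<bullet> (Mm S D *v y) = (1 / real CARD('n)) * (\<Sum>j\<in>UNIV. D $ j * (x \<bullet> (S j *v y)))"
  for S :: "'n::finite \<Rightarrow> real^'p::finite^'p"
  unfolding Mm_def
  by (simp add: sum_mvm scaleR_matrix_vector_assoc[symmetric] inner_sum_right)

lemma Am_form: "x \<bullet> (Am \<gamma> S D *v y) = x \<bullet> (Mm S D *v y) + \<gamma> * (x \<bullet> y)"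
  unfolding Am_def
  by (simp add: matrix_vector_mult_add_rdistrib scaleR_matrix_vector_assoc[symmetric] inner_add_right)


lemma Am_sym:
  fixes S :: "'n::finite \<Rightarrow> real^'p::finite^'p"
  assumes sym: "\<And>i. symmetric_matrix (S i)"
  shows "x \<bullet> (Am \<gamma> S D *v y) = (Am \<gamma> S D *v x) \<bullet> y"
proof -
  have "x \<bullet> (S j *v y) = y \<bullet> (S j *v x)" for j
    using sym_dot[of "S j" x y] sym[of j] unfolding symmetric_matrix_def by (simp add: inner_commute)
  hence "x \<bullet> (Am \<gamma> S D *v y) = y \<bullet> (Am \<gamma> S D *v x)"
    by (simp add: Am_form Mm_form inner_commute)
  thus ?thesis by (simp add: inner_commute)
qed

lemma Mm_nonneg:
  fixes S :: "'n::finite \<Rightarrow> real^'p::finite^'p"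
  assumes psd: "\<And>i. psd_matrix (S i)" and D: "posdiag D"
  shows "0 \<le> x \<bullet> (Mm S D *v x)"
proof -
  have "0 \<le> (\<Sum>j\<in>UNIV. D $ j * (x \<bullet> (S j *v x)))"
    using psd D unfolding psd_matrix_def posdiag_def by (intro sum_nonneg) (simp add: less_imp_le)
  thus ?thesis by (simp add: Mm_form)
qed

lemma Am_pos:
  fixes S :: "'n::finite \<Rightarrow> real^'p::finite^'p"
  assumes psd: "\<And>i. psd_matrix (S i)" and D: "posdiag D"
  shows "\<gamma> * (x \<bullet> x) \<le> x \<bullet> (Am \<gamma> S D *v x)"
  using Mm_nonneg[where S=S, OF psd D, of x] by (simp add: Am_form)

lemma Am_inv:
  fixes S :: "'n::finite \<Rightarrow> real^'p::finite^'p"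
  assumes psd: "\<And>i. psd_matrix (S i)" and D: "posdiag D" and g: "\<gamma> > 0"
  shows "Am \<gamma> S D ** Q_gamma \<gamma> S D = mat 1" "Q_gamma \<gamma> S D ** Am \<gamma> S D = mat 1"
proof -
  have "\<forall>x. Am \<gamma> S D *v x = 0 \<longrightarrow> x = 0"
  proof (intro allI impI)
    fix x assume "Am \<gamma> S D *v x = 0"
    hence "\<gamma> * (x \<bullet> x) \<le> 0" using Am_pos[where S=S, OF psd D, of \<gamma> x] by simp
    hence "x \<bullet> x \<le> 0" using g by (simp add: mult_le_0_iff)
    thus "x = 0" by (metis antisym inner_ge_zero inner_eq_zero_iff)
  qed
  hence "\<exists>B. B ** Am \<gamma> S D = mat 1" using matrix_left_invertible_ker by blast
  hence "invertible (Am \<gamma> S D)" using invertible_left_inverse by blast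
  hence "\<exists>A'. Am \<gamma> S D ** A' = mat 1 \<and> A' ** Am \<gamma> S D = mat 1" unfolding invertible_def by blast
  hence "Am \<gamma> S D ** matrix_inv (Am \<gamma> S D) = mat 1 \<and> matrix_inv (Am \<gamma> S D) ** Am \<gamma> S D = mat 1"
    unfolding matrix_inv_def by (rule someI_ex)
  thus "Am \<gamma> S D ** Q_gamma \<gamma> S D = mat 1" "Q_gamma \<gamma> S D ** Am \<gamma> S D = mat 1"
    by (simp_all add: Q_Am)
qed

lemma I_pos:
  fixes S :: "'n::finite \<Rightarrow> real^'p::finite^'p"
  assumes g: "\<gamma> > 0" and psd: "\<And>i. psd_matrix (S i)" and sym: "\<And>i. symmetric_matrix (S i)"
    and nz: "\<And>i. S i \<noteq> 0" and D: "posdiag D"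
  shows "posdiag (I_S \<gamma> S D)"
proof -
  have AQ: "Am \<gamma> S D ** Q_gamma \<gamma> S D = mat 1" using Am_inv[where S=S, OF psd D g] by simp
  have Qpos: "0 < x \<bullet> (Q_gamma \<gamma> S D *v x)" if "x \<noteq> 0" for x
  proof -
    define y where "y = Q_gamma \<gamma> S D *v x"
    have Ay: "Am \<gamma> S D *v y = x" unfolding y_def using AQ by (simp add: matrix_vector_mul_assoc)
    have "y \<noteq> 0" using Ay that by auto
    hence "0 < \<gamma> * (y \<bullet> y)" using g by simp
    also have "\<dots> \<le> y \<bullet> (Am \<gamma> S D *v y)" by (rule Am_pos[where S=S, OF psd D])
    also have "\<dots> = x \<bullet> y" using Ay by (simp add: inner_commute)
    finally show ?thesis unfolding y_def .
  qed
  have "0 < trace (S i ** Q_gamma \<gamma> S D)" for i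
    using trace_pos[OF _ psd[of i] nz[of i] Qpos] sym[of i] unfolding symmetric_matrix_def by blast
  thus ?thesis unfolding posdiag_def I_S_def by simp
qed

lemma loewner_inv:
  fixes A B QA QB :: "real^'p::finite^'p"
  assumes symA: "\<And>x y. x \<bullet> (A *v y) = (A *v x) \<bullet> y" and psdA: "\<And>x. 0 \<le> x \<bullet> (A *v x)"
    and AQ: "A ** QA = mat 1" and BQ: "B ** QB = mat 1"
    and le: "\<And>x. x \<bullet> (A *v x) \<le> x \<bullet> (B *v x)"
  shows "x \<bullet> (QB *v x) \<le> x \<bullet> (QA *v x)"
proof -
  define u where "u = QB *v x"
  define v where "v = QA *v x"
  have Bu: "B *v u = x" unfolding u_def using BQ by (simp add: matrix_vector_mul_assoc)
  have Av: "A *v v = x" unfolding v_def using AQ by (simp add: matrix_vector_mul_assoc)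
  have xu: "x \<bullet> u = u \<bullet> (B *v u)" using Bu by (simp add: inner_commute)
  have "0 \<le> (u - v) \<bullet> (A *v (u - v))" by (rule psdA)
  also have "\<dots> = u \<bullet> (A *v u) - u \<bullet> (A *v v) - v \<bullet> (A *v u) + v \<bullet> (A *v v)"
    by (simp add: matrix_vector_mult_diff_distrib inner_diff_left inner_diff_right)
  also have "v \<bullet> (A *v u) = x \<bullet> u" using symA[of v u] Av by simp
  also have "u \<bullet> (A *v v) = x \<bullet> u" using Av by (simp add: inner_commute)
  also have "v \<bullet> (A *v v) = x \<bullet> v" using Av by (simp add: inner_commute)
  finally have 1: "0 \<le> u \<bullet> (A *v u) - 2 * (x \<bullet> u) + x \<bullet> v" by simp
  have 2: "u \<bullet> (A *v u) \<le> x \<bullet> u" using le[of u] xu by simp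
  from 1 2 show ?thesis unfolding u_def v_def by simp
qed


lemma trace_mono:
  fixes S X Y :: "real^'p::finite^'p"
  assumes sym: "transpose S = S" and psd: "psd_matrix S" and le: "\<And>x. x \<bullet> (Y *v x) \<le> x \<bullet> (X *v x)"
  shows "trace (S ** Y) \<le> trace (S ** X)"
proof -
  obtain B where "finite B" "\<forall>b\<in>B. norm b = 1" "\<forall>b\<in>B. S *v b = (b \<bullet> (S *v b)) *\<^sub>R b"
    and trg: "\<And>X. trace (S ** X) = (\<Sum>b\<in>B. (b \<bullet> (S *v b)) * (b \<bullet> (X *v b)))"
    and "\<And>x. S *v x = (\<Sum>b\<in>B. ((x \<bullet> b) * (b \<bullet> (S *v b))) *\<^sub>R b)"
    using trace_formula[OF sym] by blast
  have "(\<Sum>b\<in>B. (b \<bullet> (S *v b)) * (b \<bullet> (Y *v b))) \<le> (\<Sum>b\<in>B. (b \<bullet> (S *v b)) * (b \<bullet> (X *v b)))"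
    by (rule sum_mono) (use psd le in \<open>auto simp: psd_matrix_def intro: mult_left_mono\<close>)
  thus ?thesis using trg[of X] trg[of Y] by simp
qed

lemma trace_scale: "trace (S ** (k *\<^sub>R Q)) = k * trace (S ** (Q::real^'p::finite^'p))"
  by (simp add: trace_def matrix_matrix_mult_def sum_distrib_left mult_ac)

lemma term_bound:
  fixes a b c :: real
  assumes a: "a > 0" and b: "b > 0" and c: "c \<ge> 1" and ab: "a \<le> c * b" and ba: "b \<le> c * a"
  shows "\<bar>a - b\<bar> / sqrt (a * b) \<le> (c - 1) / sqrt c"
proof (rule power2_le_imp_le)
  show "0 \<le> (c - 1) / sqrt c" using c by simp
  have "(c * a - b) * (a - c * b) \<le> 0"
    using ab ba by (simp add: mult_nonneg_nonpos)
  hence key: "c * (a - b)^2 \<le> a * b * (c - 1)^2"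
    by (simp add: power2_eq_square algebra_simps)
  have "(\<bar>a - b\<bar> / sqrt (a * b))^2 = (a - b)^2 / (a * b)"
    using a b by (simp add: power_divide)
  also have "\<dots> \<le> (c - 1)^2 / c"
    using key a b c by (simp add: divide_le_eq le_divide_eq mult_ac)
  also have "\<dots> = ((c - 1) / sqrt c)^2" using c by (simp add: power_divide)
  finally show "(\<bar>a - b\<bar> / sqrt (a * b))^2 \<le> ((c - 1) / sqrt c)^2" .
qed

lemma frac_le_helper: "0 < b \<Longrightarrow> 0 < d \<Longrightarrow> a * d \<le> c * b \<Longrightarrow> a / b \<le> (c::real) / d"
  by (simp add: frac_le_eq field_simps)

lemma phi_contract:
  fixes X m g :: real
  assumes X: "X \<ge> 1" and m: "m > 0" and g: "g > 0"
  shows "((X*m+g)/(m+g) - 1) / sqrt ((X*m+g)/(m+g)) \<le> sqrt (m/(m+g)) * ((X - 1) / sqrt X)"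
proof (rule power2_le_imp_le)
  define c where "c = (X*m+g)/(m+g)"
  have c1: "c \<ge> 1" unfolding c_def using X m g by (simp add: le_divide_eq)
  have cm1: "c - 1 = m * (X - 1) / (m + g)" unfolding c_def using m g by (simp add: field_simps)
  show "0 \<le> sqrt (m/(m+g)) * ((X - 1) / sqrt X)" using X m g by simp
  have "((c - 1) / sqrt c)^2 = (c - 1)^2 / c" using c1 by (simp add: power_divide)
  also have "\<dots> = m^2 * (X - 1)^2 / ((m + g) * (X*m+g))"
  proof -
    have p1: "X*m+g > 0" "m + g > 0" using m g X by (auto intro: add_pos_pos mult_pos_pos)
    have "(c - 1)^2 / c = (m * (X - 1))^2 / (m + g)^2 * ((m + g) / (X*m+g))"
      by (subst cm1) (simp add: c_def power_divide)
    also have "\<dots> = (m * (X - 1))^2 / ((m + g) * (X*m+g))"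
      using p1 by (simp add: power2_eq_square)
    also have "\<dots> = m^2 * (X - 1)^2 / ((m + g) * (X*m+g))"
      by (simp add: power_mult_distrib)
    finally show ?thesis .
  qed
  also have "\<dots> \<le> m * (X - 1)^2 / ((m + g) * X)"
  proof -
    have "m^2 * (X - 1)^2 * ((m + g) * X) \<le> m * (X - 1)^2 * ((m + g) * (X*m+g))"
    proof -
      have "m * X \<le> X * m + g" using g by simp
      hence "m * (m * X) * ((X - 1)^2 * (m + g)) \<le> m * (X * m + g) * ((X - 1)^2 * (m + g))"
        using m g by (intro mult_right_mono mult_left_mono) auto
      thus ?thesis by (simp add: power2_eq_square mult_ac)
    qed
    moreover have "0 < (m + g) * (X*m+g)" "0 < (m + g) * X" using m g X by (auto intro!: mult_pos_pos add_pos_pos)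
    ultimately show ?thesis by (intro frac_le_helper) (auto simp: mult_ac)
  qed
  also have "\<dots> = (sqrt (m/(m+g)) * ((X - 1) / sqrt X))^2"
    using m g X by (simp add: power_mult_distrib power_divide)
  finally show "(((X*m+g)/(m+g) - 1) / sqrt ((X*m+g)/(m+g)))^2 \<le> (sqrt (m/(m+g)) * ((X - 1) / sqrt X))^2"
    unfolding c_def .
qed

lemma ds_ge: "\<bar>D $ i - D' $ i\<bar> / sqrt (D $ i * D' $ i) \<le> d_s D D'"
  unfolding d_s_def by (rule Max_ge) auto

lemma ds_le: "(\<And>i. \<bar>D $ i - D' $ i\<bar> / sqrt (D $ i * D' $ i) \<le> K) \<Longrightarrow> d_s D D' \<le> K"
  unfolding d_s_def by (subst Max_le_iff) auto

lemma ds_nonneg: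
  assumes "posdiag D" "posdiag D'"
  shows "0 \<le> d_s D D'"
proof -
  have "0 \<le> \<bar>D $ i - D' $ i\<bar> / sqrt (D $ i * D' $ i)" for i
    using assms unfolding posdiag_def by (simp add: less_imp_le)
  thus ?thesis using ds_ge[of D undefined D'] by (rule order_trans)
qed

lemma ds_zero:
  assumes "posdiag D" "posdiag D'" "d_s D D' \<le> 0"
  shows "D = D'"
proof -
  have "\<bar>D $ i - D' $ i\<bar> / sqrt (D $ i * D' $ i) \<le> 0" for i using ds_ge[of D i D'] assms(3) by linarith
  moreover have "0 < sqrt (D $ i * D' $ i)" for i using assms(1,2) unfolding posdiag_def by simp
  ultimately have "\<bar>D $ i - D' $ i\<bar> \<le> 0" for i by (simp add: divide_le_eq)
  thus ?thesis by (simp add: vec_eq_iff)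
qed


lemma ratio_term_ge:
  fixes a b :: real
  assumes a: "a > 0" and b: "b > 0" and ab: "b \<le> a"
  shows "\<bar>a - b\<bar> / sqrt (a * b) = (a / b - 1) / sqrt (a / b)"
proof -
  have sb: "sqrt b * sqrt b = b" using b by simp
  have "(a / b - 1) / sqrt (a / b) = ((a - b) / b) * (sqrt b / sqrt a)"
    using a b by (simp add: real_sqrt_divide field_simps)
  also have "\<dots> = (a - b) / (sqrt a * sqrt b)"
    using a b sb by (simp add: field_simps)
  also have "\<dots> = \<bar>a - b\<bar> / sqrt (a * b)" using ab by (simp add: real_sqrt_mult)
  finally show ?thesis by simp
qed

lemma ratio_term:
  fixes a b :: real
  assumes a: "a > 0" and b: "b > 0"
  shows "\<bar>a - b\<bar> / sqrt (a * b) = (max (b / a) (a / b) - 1) / sqrt (max (b / a) (a / b))"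
proof (cases "b \<le> a")
  case True
  hence "b / a \<le> a / b" using a b by (simp add: frac_le_eq field_simps) (use mult_mono[of b a b a] in auto)
  hence "max (b / a) (a / b) = a / b" by simp
  thus ?thesis using ratio_term_ge[OF a b True] by simp
next
  case False
  hence "a / b \<le> b / a" using a b by (simp add: frac_le_eq field_simps) (use mult_mono[of a b a b] in auto)
  hence "max (b / a) (a / b) = b / a" by simp
  thus ?thesis using ratio_term_ge[OF b a] False by (simp add: abs_minus_commute mult.commute)
qed

lemma I_onedir:
  fixes S :: "'n::finite \<Rightarrow> real^'p::finite^'p"
  assumes g: "\<gamma> > 0" and psd: "\<And>i. psd_matrix (S i)" and sym: "\<And>i. symmetric_matrix (S i)"
    and D: "posdiag D" and D': "posdiag D'" and X: "X \<ge> 1" and DX: "\<And>j. D' $ j \<le> X * D $ j"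
    and m: "m > 0" and mb: "\<And>x. x \<bullet> (Mm S D *v x) \<le> m * (x \<bullet> x)"
  shows "I_S \<gamma> S D $ i \<le> ((X*m+\<gamma>)/(m+\<gamma>)) * I_S \<gamma> S D' $ i"
proof -
  define c where "c = (X*m+\<gamma>)/(m+\<gamma>)"
  have mg: "m + \<gamma> > 0" using m g by simp
  have c1: "c \<ge> 1" unfolding c_def using X m g by (simp add: le_divide_eq)
  have MX: "x \<bullet> (Mm S D' *v x) \<le> X * (x \<bullet> (Mm S D *v x))" for x
  proof -
    have "(\<Sum>j\<in>UNIV. D' $ j * (x \<bullet> (S j *v x))) \<le> (\<Sum>j\<in>UNIV. X * (D $ j * (x \<bullet> (S j *v x))))"
      by (rule sum_mono) (use DX psd in \<open>auto simp: psd_matrix_def mult.assoc[symmetric] intro: mult_right_mono\<close>)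
    hence "(\<Sum>j\<in>UNIV. D' $ j * (x \<bullet> (S j *v x))) / real CARD('n) \<le> X * (\<Sum>j\<in>UNIV. D $ j * (x \<bullet> (S j *v x))) / real CARD('n)"
      by (simp add: sum_distrib_left[symmetric] divide_right_mono)
    thus ?thesis by (simp add: Mm_form)
  qed
  have le: "x \<bullet> (Am \<gamma> S D' *v x) \<le> x \<bullet> ((c *\<^sub>R Am \<gamma> S D) *v x)" for x
  proof -
    define a where "a = x \<bullet> (Mm S D *v x)"
    define s where "s = x \<bullet> x"
    have a0: "0 \<le> a" unfolding a_def by (rule Mm_nonneg[where S=S, OF psd D])
    have am: "a \<le> m * s" unfolding a_def s_def by (rule mb)
    have s0: "0 \<le> s" unfolding s_def by simp
    have lhs: "x \<bullet> (Am \<gamma> S D' *v x) \<le> X * a + \<gamma> * s"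
      using MX[of x] unfolding a_def s_def by (simp add: Am_form)
    have rhs: "x \<bullet> ((c *\<^sub>R Am \<gamma> S D) *v x) = c * (a + \<gamma> * s)"
      unfolding a_def s_def by (simp add: scaleR_matrix_vector_assoc[symmetric] Am_form)
    have id: "(X*m+\<gamma>) * (a + \<gamma> * s) - (m+\<gamma>) * (X * a + \<gamma> * s) = \<gamma> * ((X - 1) * (m * s - a))"
      by (simp add: algebra_simps)
    have "0 \<le> \<gamma> * ((X - 1) * (m * s - a))" using g X am by simp
    hence "(m+\<gamma>) * (X * a + \<gamma> * s) \<le> (X*m+\<gamma>) * (a + \<gamma> * s)" using id by linarith
    hence "X * a + \<gamma> * s \<le> c * (a + \<gamma> * s)" unfolding c_def using mg
      by (simp add: le_divide_eq mult.commute)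
    thus ?thesis using lhs rhs by simp
  qed
  have AQ: "Am \<gamma> S D' ** Q_gamma \<gamma> S D' = mat 1" using Am_inv[where S=S, OF psd D' g] by simp
  have AQ0: "Am \<gamma> S D ** Q_gamma \<gamma> S D = mat 1" using Am_inv[where S=S, OF psd D g] by simp
  have BQ: "(c *\<^sub>R Am \<gamma> S D) ** ((1/c) *\<^sub>R Q_gamma \<gamma> S D) = mat 1"
    using c1 AQ0 by (simp add: matrix_scalar_ac scalar_matrix_assoc[symmetric])
  have q: "x \<bullet> (((1/c) *\<^sub>R Q_gamma \<gamma> S D) *v x) \<le> x \<bullet> (Q_gamma \<gamma> S D' *v x)" for x
  proof (rule loewner_inv[OF _ _ AQ BQ le])
    show "\<And>x y. x \<bullet> (Am \<gamma> S D' *v y) = (Am \<gamma> S D' *v x) \<bullet> y" by (rule Am_sym[OF sym])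
    show "\<And>x. 0 \<le> x \<bullet> (Am \<gamma> S D' *v x)"
      using Am_pos[where S=S, OF psd D'] g by (meson inner_ge_zero mult_nonneg_nonneg order_trans less_imp_le)
  qed
  have "trace (S i ** ((1/c) *\<^sub>R Q_gamma \<gamma> S D)) \<le> trace (S i ** Q_gamma \<gamma> S D')"
    by (rule trace_mono[OF _ psd q]) (use sym[of i] in \<open>simp add: symmetric_matrix_def\<close>)
  hence "(1/c) * trace (S i ** Q_gamma \<gamma> S D) \<le> trace (S i ** Q_gamma \<gamma> S D')"
    by (simp add: trace_scale)
  hence "trace (S i ** Q_gamma \<gamma> S D) \<le> c * trace (S i ** Q_gamma \<gamma> S D')"
    using c1 by (simp add: divide_le_eq mult.commute)
  hence "(1 / real CARD('n)) * trace (S i ** Q_gamma \<gamma> S D) \<le> c * ((1 / real CARD('n)) * trace (S i ** Q_gamma \<gamma> S D'))"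
    by (simp add: divide_right_mono mult.left_commute)
  thus ?thesis unfolding I_S_def c_def by simp
qed


lemma I_contract:
  fixes S :: "'n::finite \<Rightarrow> real^'p::finite^'p"
  assumes g: "\<gamma> > 0" and psd: "\<And>i. psd_matrix (S i)" and sym: "\<And>i. symmetric_matrix (S i)"
    and nz: "\<And>i. S i \<noteq> 0"
    and D: "posdiag D" and D': "posdiag D'"
    and m: "m > 0" and mb: "\<And>x. x \<bullet> (Mm S D *v x) \<le> m * (x \<bullet> x)"
    and mb': "\<And>x. x \<bullet> (Mm S D' *v x) \<le> m * (x \<bullet> x)"
  shows "d_s (I_S \<gamma> S D) (I_S \<gamma> S D') \<le> sqrt (m/(m+\<gamma>)) * d_s D D'"
proof -
  define r where "r j = max (D' $ j / D $ j) (D $ j / D' $ j)" for j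
  define X where "X = Max (range r)"
  have Dp: "D $ j > 0" "D' $ j > 0" for j using D D' unfolding posdiag_def by auto
  have rX: "r j \<le> X" for j unfolding X_def by (rule Max_ge) auto
  have "X \<in> range r" unfolding X_def by (rule Max_in) auto
  then obtain j0 where j0: "X = r j0" by blast
  have r1: "r j \<ge> 1" for j
  proof (cases "D $ j \<le> D' $ j")
    case True
    hence "1 \<le> D' $ j / D $ j" using Dp[of j] by simp
    thus ?thesis unfolding r_def by simp
  next
    case False
    hence "1 \<le> D $ j / D' $ j" using Dp[of j] by simp
    thus ?thesis unfolding r_def by simp
  qed
  have X1: "X \<ge> 1" using r1[of j0] j0 by simp
  have DX: "D' $ j \<le> X * D $ j" for j
  proof -
    have "D' $ j / D $ j \<le> X" using rX[of j] unfolding r_def by simp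
    thus ?thesis using Dp[of j] by (simp add: divide_le_eq)
  qed
  have DX': "D $ j \<le> X * D' $ j" for j
  proof -
    have "D $ j / D' $ j \<le> X" using rX[of j] unfolding r_def by simp
    thus ?thesis using Dp[of j] by (simp add: divide_le_eq)
  qed
  have phiX: "(X - 1) / sqrt X \<le> d_s D D'"
  proof -
    have "\<bar>D $ j0 - D' $ j0\<bar> / sqrt (D $ j0 * D' $ j0) = (X - 1) / sqrt X"
      using ratio_term[OF Dp(1)[of j0] Dp(2)[of j0]] j0 unfolding r_def by simp
    thus ?thesis using ds_ge[of D j0 D'] by simp
  qed
  define c where "c = (X*m+\<gamma>)/(m+\<gamma>)"
  have c1: "c \<ge> 1" unfolding c_def using X1 m g by (simp add: le_divide_eq)
  have I1: "I_S \<gamma> S D $ i \<le> c * I_S \<gamma> S D' $ i" for i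
    unfolding c_def by (rule I_onedir[OF g psd sym D D' X1 DX m mb])
  have I2: "I_S \<gamma> S D' $ i \<le> c * I_S \<gamma> S D $ i" for i
    unfolding c_def by (rule I_onedir[OF g psd sym D' D X1 DX' m mb'])
  have Ip: "I_S \<gamma> S D $ i > 0" "I_S \<gamma> S D' $ i > 0" for i
    using I_pos[OF g psd sym nz D] I_pos[OF g psd sym nz D'] unfolding posdiag_def by auto
  show ?thesis
  proof (rule ds_le)
    fix i
    have "\<bar>I_S \<gamma> S D $ i - I_S \<gamma> S D' $ i\<bar> / sqrt (I_S \<gamma> S D $ i * I_S \<gamma> S D' $ i) \<le> (c - 1) / sqrt c"
      by (rule term_bound[OF Ip(1) Ip(2) c1 I1 I2])
    also have "\<dots> \<le> sqrt (m/(m+\<gamma>)) * ((X - 1) / sqrt X)"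
      unfolding c_def by (rule phi_contract[OF X1 m g])
    also have "\<dots> \<le> sqrt (m/(m+\<gamma>)) * d_s D D'"
      using phiX by (rule mult_left_mono) (use m g in simp)
    finally show "\<bar>I_S \<gamma> S D $ i - I_S \<gamma> S D' $ i\<bar> / sqrt (I_S \<gamma> S D $ i * I_S \<gamma> S D' $ i) \<le> sqrt (m/(m+\<gamma>)) * d_s D D'" .
  qed
qed


lemma two_ln_le:
  fixes s :: real
  assumes s: "s \<ge> 1"
  shows "2 * ln s \<le> s - 1 / s"
proof -
  let ?g = "\<lambda>t::real. t - 1 / t - 2 * ln t"
  have "?g 1 \<le> ?g s"
  proof (rule DERIV_nonneg_imp_nondecreasing[OF s])
    fix x :: real assume x: "1 \<le> x" "x \<le> s"
    have "DERIV ?g x :> (1 + 1 / x^2 - 2 / x)"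
      using x by (auto intro!: derivative_eq_intros simp: power2_eq_square field_simps)
    moreover have "0 \<le> 1 + 1 / x^2 - 2 / x"
    proof -
      have "1 + 1 / x^2 - 2 / x = (1 - 1 / x)^2" using x by (simp add: power2_eq_square field_simps)
      thus ?thesis by simp
    qed
    ultimately show "\<exists>y. DERIV ?g x :> y \<and> 0 \<le> y" by blast
  qed
  thus ?thesis by simp
qed

lemma ln_bound_ge:
  fixes a b :: real
  assumes a: "a > 0" and b: "b > 0" and ab: "b \<le> a"
  shows "\<bar>ln a - ln b\<bar> \<le> \<bar>a - b\<bar> / sqrt (a * b)"
proof -
  define r where "r = a / b"
  have r1: "r \<ge> 1" unfolding r_def using a b ab by simp
  have "ln a - ln b = ln r" unfolding r_def using a b by (simp add: ln_div)
  also have "\<dots> = 2 * ln (sqrt r)" using r1 by (simp add: ln_sqrt)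
  also have "\<dots> \<le> sqrt r - 1 / sqrt r" by (rule two_ln_le) (use r1 in simp)
  also have "\<dots> = (r - 1) / sqrt r" using r1 by (simp add: field_simps)
  also have "\<dots> = \<bar>a - b\<bar> / sqrt (a * b)" unfolding r_def using ratio_term_ge[OF a b ab] by simp
  finally have "ln a - ln b \<le> \<bar>a - b\<bar> / sqrt (a * b)" .
  moreover have "ln b \<le> ln a" using a b ab by simp
  ultimately show ?thesis by simp
qed

lemma ln_bound:
  fixes a b :: real
  assumes a: "a > 0" and b: "b > 0"
  shows "\<bar>ln a - ln b\<bar> \<le> \<bar>a - b\<bar> / sqrt (a * b)"
proof (cases "b \<le> a")
  case True thus ?thesis using ln_bound_ge[OF a b] by simp
next
  case False
  hence "\<bar>ln b - ln a\<bar> \<le> \<bar>b - a\<bar> / sqrt (b * a)" using ln_bound_ge[OF b a] by simp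
  thus ?thesis by (simp add: abs_minus_commute mult.commute)
qed

lemma geom_conv:
  fixes u :: "nat \<Rightarrow> real"
  assumes du: "\<And>k. \<bar>u (Suc k) - u k\<bar> \<le> C * q^k" and q0: "0 \<le> q" and q1: "q < 1"
  shows "convergent u"
proof -
  have "summable (\<lambda>k. C * q^k)" using q0 q1 by (intro summable_mult summable_geometric) simp
  hence sm: "summable (\<lambda>k. u (Suc k) - u k)"
    by (rule summable_comparison_test') (use du in simp)
  have "(\<lambda>n. \<Sum>k<n. u (Suc k) - u k) \<longlonglongrightarrow> suminf (\<lambda>k. u (Suc k) - u k)"
    by (rule summable_LIMSEQ[OF sm])
  hence "(\<lambda>n. u n - u 0) \<longlonglongrightarrow> suminf (\<lambda>k. u (Suc k) - u k)"
    by (simp add: sum_lessThan_telescope)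
  hence "(\<lambda>n. (u n - u 0) + u 0) \<longlonglongrightarrow> suminf (\<lambda>k. u (Suc k) - u k) + u 0"
    by (intro tendsto_add tendsto_const)
  thus ?thesis unfolding convergent_def by auto
qed

lemma ds_le_sum:
  assumes "posdiag D" "posdiag D'"
  shows "d_s D D' \<le> (\<Sum>i\<in>UNIV. \<bar>D $ i - D' $ i\<bar> / sqrt (D $ i * D' $ i))"
proof (rule ds_le)
  fix i
  have nn: "0 \<le> \<bar>D $ j - D' $ j\<bar> / sqrt (D $ j * D' $ j)" for j
    using assms unfolding posdiag_def by (simp add: less_imp_le)
  show "\<bar>D $ i - D' $ i\<bar> / sqrt (D $ i * D' $ i) \<le> (\<Sum>i\<in>UNIV. \<bar>D $ i - D' $ i\<bar> / sqrt (D $ i * D' $ i))"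
    by (rule member_le_sum) (use nn in auto)
qed


lemma fixpoint:
  fixes F :: "real^'n::finite \<Rightarrow> real^'n"
  assumes Fp: "\<And>D. posdiag D \<Longrightarrow> posdiag (F D)" and k0: "0 \<le> k" and k1: "k < 1"
    and Fc: "\<And>D D'. posdiag D \<Longrightarrow> posdiag D' \<Longrightarrow> d_s (F D) (F D') \<le> k * d_s D D'"
  shows "\<exists>!D. posdiag D \<and> D = F D"
proof -
  define x where "x n = (F ^^ n) (\<chi> i. 1)" for n
  have xS: "x (Suc n) = F (x n)" for n unfolding x_def by simp
  have xp: "posdiag (x n)" for n
  proof (induction n)
    case 0 show ?case unfolding x_def posdiag_def by simp
  next
    case (Suc n) thus ?case using Fp xS by simp
  qed
  define C where "C = d_s (x 1) (x 0)"
  have dk: "d_s (x (Suc n)) (x n) \<le> C * k^n" for n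
  proof (induction n)
    case 0 show ?case unfolding C_def by simp
  next
    case (Suc n)
    have "d_s (x (Suc (Suc n))) (x (Suc n)) \<le> k * d_s (x (Suc n)) (x n)"
      using Fc[OF xp[of "Suc n"] xp[of n]] by (simp only: xS)
    also have "\<dots> \<le> k * (C * k^n)" using Suc k0 by (simp add: mult_left_mono)
    finally show ?case by (simp add: mult_ac)
  qed
  have xpos: "x n $ i > 0" for n i using xp unfolding posdiag_def by simp
  have conv: "convergent (\<lambda>n. ln (x n $ i))" for i
  proof (rule geom_conv[OF _ k0 k1])
    fix n
    have "\<bar>ln (x (Suc n) $ i) - ln (x n $ i)\<bar> \<le> \<bar>x (Suc n) $ i - x n $ i\<bar> / sqrt (x (Suc n) $ i * x n $ i)"
      by (rule ln_bound[OF xpos xpos])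
    also have "\<dots> \<le> d_s (x (Suc n)) (x n)" by (rule ds_ge)
    also have "\<dots> \<le> C * k^n" by (rule dk)
    finally show "\<bar>ln (x (Suc n) $ i) - ln (x n $ i)\<bar> \<le> C * k^n" .
  qed
  define L where "L i = lim (\<lambda>n. ln (x n $ i))" for i
  have Lt: "(\<lambda>n. ln (x n $ i)) \<longlonglongrightarrow> L i" for i
    unfolding L_def using conv convergent_LIMSEQ_iff by blast
  define xs where "xs = (\<chi> i. exp (L i))"
  have xst: "(\<lambda>n. x n $ i) \<longlonglongrightarrow> xs $ i" for i
  proof -
    have "(\<lambda>n. exp (ln (x n $ i))) \<longlonglongrightarrow> exp (L i)" by (intro tendsto_exp Lt)
    thus ?thesis unfolding xs_def using xpos by simp
  qed
  have xsp: "posdiag xs" unfolding xs_def posdiag_def by simp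
  have xsi: "xs $ i > 0" for i using xsp unfolding posdiag_def by simp
  have dconv: "(\<lambda>n. d_s (x n) xs) \<longlonglongrightarrow> 0"
  proof (rule tendsto_sandwich[of "\<lambda>_. 0" _ _ "\<lambda>n. \<Sum>i\<in>UNIV. \<bar>x n $ i - xs $ i\<bar> / sqrt (x n $ i * xs $ i)"])
    show "\<forall>\<^sub>F n in sequentially. 0 \<le> d_s (x n) xs" using ds_nonneg[OF xp xsp] by simp
    show "\<forall>\<^sub>F n in sequentially. d_s (x n) xs \<le> (\<Sum>i\<in>UNIV. \<bar>x n $ i - xs $ i\<bar> / sqrt (x n $ i * xs $ i))"
      using ds_le_sum[OF xp xsp] by simp
    show "(\<lambda>n. 0::real) \<longlonglongrightarrow> 0" by simp
    have "(\<lambda>n. \<Sum>i\<in>UNIV. \<bar>x n $ i - xs $ i\<bar> / sqrt (x n $ i * xs $ i)) \<longlonglongrightarrow>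
          (\<Sum>i\<in>UNIV. \<bar>xs $ i - xs $ i\<bar> / sqrt (xs $ i * xs $ i))"
    proof (intro tendsto_sum tendsto_divide tendsto_rabs tendsto_diff tendsto_const tendsto_real_sqrt tendsto_mult xst)
      fix i show "sqrt (xs $ i * xs $ i) \<noteq> 0" using xsi[of i] by simp
    qed
    thus "(\<lambda>n. \<Sum>i\<in>UNIV. \<bar>x n $ i - xs $ i\<bar> / sqrt (x n $ i * xs $ i)) \<longlonglongrightarrow> 0" by simp
  qed
  have Fxsp: "posdiag (F xs)" using Fp[OF xsp] .
  have Fxsi: "F xs $ i > 0" for i using Fxsp unfolding posdiag_def by simp
  have fxs: "F xs = xs"
  proof -
    have "F xs $ i = xs $ i" for i
    proof -
      define t where "t n = \<bar>x (Suc n) $ i - F xs $ i\<bar> / sqrt (x (Suc n) $ i * F xs $ i)" for n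
      have t0: "t \<longlonglongrightarrow> 0"
      proof (rule tendsto_sandwich[of "\<lambda>_. 0" _ _ "\<lambda>n. k * d_s (x n) xs"])
        show "\<forall>\<^sub>F n in sequentially. 0 \<le> t n" unfolding t_def using xpos Fxsi
          by (simp add: less_imp_le)
        have "t n \<le> k * d_s (x n) xs" for n
        proof -
          have "t n \<le> d_s (x (Suc n)) (F xs)" unfolding t_def by (rule ds_ge)
          also have "\<dots> \<le> k * d_s (x n) xs" unfolding xS by (rule Fc[OF xp xsp])
          finally show ?thesis .
        qed
        thus "\<forall>\<^sub>F n in sequentially. t n \<le> k * d_s (x n) xs" by simp
        show "(\<lambda>n. 0::real) \<longlonglongrightarrow> 0" by simp
        show "(\<lambda>n. k * d_s (x n) xs) \<longlonglongrightarrow> 0" using tendsto_mult[OF tendsto_const dconv, of k] by simp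
      qed
      have s1: "(\<lambda>n. x (Suc n) $ i) \<longlonglongrightarrow> xs $ i" using xst[of i] by (rule LIMSEQ_Suc)
      have "(\<lambda>n. t n * sqrt (x (Suc n) $ i * F xs $ i)) \<longlonglongrightarrow> 0 * sqrt (xs $ i * F xs $ i)"
        by (intro tendsto_mult t0 tendsto_real_sqrt tendsto_const s1)
      moreover have "t n * sqrt (x (Suc n) $ i * F xs $ i) = \<bar>x (Suc n) $ i - F xs $ i\<bar>" for n
        unfolding t_def using xpos[of "Suc n" i] Fxsi[of i] by simp
      ultimately have "(\<lambda>n. \<bar>x (Suc n) $ i - F xs $ i\<bar>) \<longlonglongrightarrow> 0" by simp
      hence "(\<lambda>n. x (Suc n) $ i - F xs $ i) \<longlonglongrightarrow> 0" by (simp add: tendsto_rabs_zero_iff)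
      hence "(\<lambda>n. (x (Suc n) $ i - F xs $ i) + F xs $ i) \<longlonglongrightarrow> 0 + F xs $ i"
        by (intro tendsto_add tendsto_const)
      hence "(\<lambda>n. x (Suc n) $ i) \<longlonglongrightarrow> F xs $ i" by simp
      thus ?thesis using s1 LIMSEQ_unique by blast
    qed
    thus ?thesis by (simp add: vec_eq_iff)
  qed
  show ?thesis
  proof (rule ex1I[of _ xs])
    show "posdiag xs \<and> xs = F xs" using xsp fxs by simp
    fix y assume y: "posdiag y \<and> y = F y"
    have "d_s y xs = d_s (F y) (F xs)" using y fxs by simp
    also have "\<dots> \<le> k * d_s y xs" using Fc y xsp by blast
    finally have "(1 - k) * d_s y xs \<le> 0" by (simp add: algebra_simps)
    hence "d_s y xs \<le> 0" using k1 by (simp add: mult_le_0_iff)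
    thus "y = xs" using ds_zero y xsp by blast
  qed
qed


lemma S_bounds:
  fixes S :: "'n::finite \<Rightarrow> real^'p::finite^'p"
  shows "\<exists>mS. \<forall>j. mS j > 0 \<and> (\<forall>x. x \<bullet> (S j *v x) \<le> mS j * (x \<bullet> x))"
proof -
  have "\<exists>K>0. \<forall>x. x \<bullet> (S j *v x) \<le> K * (x \<bullet> x)" for j
  proof -
    obtain K where K: "K > 0" "\<And>x. norm (S j *v x) \<le> norm x * K"
      using bounded_linear.pos_bounded[OF matrix_vector_mul_bounded_linear[of "S j"]] by blast
    have "x \<bullet> (S j *v x) \<le> K * (x \<bullet> x)" for x
    proof -
      have "x \<bullet> (S j *v x) \<le> norm x * norm (S j *v x)" by (rule norm_cauchy_schwarz)
      also have "\<dots> \<le> norm x * (norm x * K)" using K(2)[of x] by (simp add: mult_left_mono)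
      also have "\<dots> = K * (x \<bullet> x)" by (simp add: dot_square_norm power2_eq_square mult_ac)
      finally show ?thesis .
    qed
    thus ?thesis using K(1) by blast
  qed
  thus ?thesis by metis
qed

lemma Mm_bound:
  fixes S :: "'n::finite \<Rightarrow> real^'p::finite^'p"
  assumes mS: "\<forall>j. mS j > 0 \<and> (\<forall>x. x \<bullet> (S j *v x) \<le> mS j * (x \<bullet> x))"
    and psd: "\<And>i. psd_matrix (S i)" and D: "posdiag D" and DE: "\<And>j. D $ j \<le> E $ j"
  shows "x \<bullet> (Mm S D *v x) \<le> ((1 / real CARD('n)) * (\<Sum>j\<in>UNIV. E $ j * mS j) + 1) * (x \<bullet> x)"
    and "0 < (1 / real CARD('n)) * (\<Sum>j\<in>UNIV. E $ j * mS j) + 1"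
proof -
  have Dp: "D $ j > 0" for j using D unfolding posdiag_def by simp
  have Ep: "E $ j > 0" for j using Dp[of j] DE[of j] by linarith
  have "(\<Sum>j\<in>UNIV. D $ j * (x \<bullet> (S j *v x))) \<le> (\<Sum>j\<in>UNIV. E $ j * mS j * (x \<bullet> x))"
  proof (rule sum_mono)
    fix j
    have "D $ j * (x \<bullet> (S j *v x)) \<le> D $ j * (mS j * (x \<bullet> x))"
      using mS Dp[of j] by (simp add: mult_left_mono less_imp_le)
    also have "\<dots> \<le> E $ j * (mS j * (x \<bullet> x))"
    proof (rule mult_right_mono[OF DE[of j]])
      show "0 \<le> mS j * (x \<bullet> x)" using mS by (simp add: less_imp_le)
    qed
    finally show "D $ j * (x \<bullet> (S j *v x)) \<le> E $ j * mS j * (x \<bullet> x)" by (simp add: mult_ac)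
  qed
  hence "x \<bullet> (Mm S D *v x) \<le> (1 / real CARD('n)) * (\<Sum>j\<in>UNIV. E $ j * mS j) * (x \<bullet> x)"
    by (simp add: Mm_form sum_distrib_right[symmetric] divide_right_mono)
  also have "\<dots> \<le> ((1 / real CARD('n)) * (\<Sum>j\<in>UNIV. E $ j * mS j) + 1) * (x \<bullet> x)"
    by (simp add: distrib_right)
  finally show "x \<bullet> (Mm S D *v x) \<le> ((1 / real CARD('n)) * (\<Sum>j\<in>UNIV. E $ j * mS j) + 1) * (x \<bullet> x)" .
  have "0 \<le> (\<Sum>j\<in>UNIV. E $ j * mS j)" using Ep mS by (intro sum_nonneg) (simp add: less_imp_le)
  thus "0 < (1 / real CARD('n)) * (\<Sum>j\<in>UNIV. E $ j * mS j) + 1" by (simp add: add_nonneg_pos)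
qed

theorem corollary2:
  fixes \<gamma> :: real and S :: "'n::finite \<Rightarrow> real^'p::finite^'p"
    and f :: "real^'n \<Rightarrow> real^'n" and lam_f :: real
  assumes "\<gamma> > 0"
    and "\<And>i. psd_matrix (S i)" and "\<And>i. symmetric_matrix (S i)" and "\<And>i. S i \<noteq> 0"
    and "\<And>D. posdiag D \<Longrightarrow> posdiag (f D)"
    and "stable f"
    and "lipschitz_ds lam_f f"
    and "(\<exists>f0. \<forall>D. posdiag D \<longrightarrow> (\<forall>i. f D $ i \<le> f0 $ i)) \<or> lam_f < 1"
  shows "\<exists>!D. posdiag D \<and> D = I_S \<gamma> S (f D)"
proof -
  note g = assms(1) and psd = assms(2) and sym = assms(3) and nz = assms(4) and fp = assms(5)
  have stab: "d_s (f D) (f D') \<le> d_s D D'" if "posdiag D" "posdiag D'" for D D'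
    using assms(6) that unfolding stable_def lipschitz_ds_def by fastforce
  have lip: "d_s (f D) (f D') \<le> lam_f * d_s D D'" if "posdiag D" "posdiag D'" for D D'
    using assms(7) that unfolding lipschitz_ds_def by blast
  obtain mS where mS: "\<forall>j. mS j > 0 \<and> (\<forall>x. x \<bullet> (S j *v x) \<le> mS j * (x \<bullet> x))"
    using S_bounds[of S] by blast
  define F where "F D = I_S \<gamma> S (f D)" for D
  have Fp: "posdiag (F D)" if "posdiag D" for D
    unfolding F_def by (rule I_pos[OF g psd sym nz fp[OF that]])
  have sq1: "sqrt (m / (m + \<gamma>)) < 1" "0 \<le> sqrt (m / (m + \<gamma>))" if "m > 0" for m
    using that g by simp_all
  have Inonexp: "d_s (I_S \<gamma> S D) (I_S \<gamma> S D') \<le> d_s D D'" if D: "posdiag D" and D': "posdiag D'" for D D'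
  proof -
    define E where "E = D + D'"
    have DE: "D $ j \<le> E $ j" "D' $ j \<le> E $ j" for j using D D' unfolding E_def posdiag_def
      by (simp_all add: less_imp_le)
    define m where "m = (1 / real CARD('n)) * (\<Sum>j\<in>UNIV. E $ j * mS j) + 1"
    have m: "m > 0" unfolding m_def by (rule Mm_bound(2)[OF mS psd D DE(1)])
    have "d_s (I_S \<gamma> S D) (I_S \<gamma> S D') \<le> sqrt (m/(m+\<gamma>)) * d_s D D'"
      by (rule I_contract[OF g psd sym nz D D' m]) (unfold m_def, rule Mm_bound(1)[OF mS psd D DE(1)],
          rule Mm_bound(1)[OF mS psd D' DE(2)])
    also have "\<dots> \<le> 1 * d_s D D'"
      by (rule mult_right_mono) (use sq1[OF m] ds_nonneg[OF D D'] in auto)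
    finally show ?thesis by simp
  qed
  have "\<exists>k. 0 \<le> k \<and> k < 1 \<and> (\<forall>D D'. posdiag D \<longrightarrow> posdiag D' \<longrightarrow> d_s (F D) (F D') \<le> k * d_s D D')"
    using assms(8)
  proof
    assume "\<exists>f0. \<forall>D. posdiag D \<longrightarrow> (\<forall>i. f D $ i \<le> f0 $ i)"
    then obtain f0 where f0: "\<And>D i. posdiag D \<Longrightarrow> f D $ i \<le> f0 $ i" by blast
    define m where "m = (1 / real CARD('n)) * (\<Sum>j\<in>UNIV. f0 $ j * mS j) + 1"
    have one: "posdiag ((\<chi> i. 1) :: real^'n)" unfolding posdiag_def by simp
    have m: "m > 0" unfolding m_def by (rule Mm_bound(2)[OF mS psd fp[OF one] f0[OF one]])
    show ?thesis
    proof (intro exI conjI allI impI)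
      show "0 \<le> sqrt (m / (m + \<gamma>))" "sqrt (m / (m + \<gamma>)) < 1" using sq1[OF m] by auto
      fix D D' :: "real^'n" assume D: "posdiag D" and D': "posdiag D'"
      have "d_s (F D) (F D') \<le> sqrt (m/(m+\<gamma>)) * d_s (f D) (f D')"
        unfolding F_def
        by (rule I_contract[OF g psd sym nz fp[OF D] fp[OF D'] m]) (unfold m_def, rule Mm_bound(1)[OF mS psd fp[OF D] f0[OF D]],
          rule Mm_bound(1)[OF mS psd fp[OF D'] f0[OF D']])
      also have "\<dots> \<le> sqrt (m/(m+\<gamma>)) * d_s D D'"
        by (rule mult_left_mono[OF stab[OF D D']]) (use sq1[OF m] in auto)
      finally show "d_s (F D) (F D') \<le> sqrt (m/(m+\<gamma>)) * d_s D D'" .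
    qed
  next
    assume l1: "lam_f < 1"
    show ?thesis
    proof (intro exI conjI allI impI)
      show "0 \<le> max lam_f 0" "max lam_f 0 < 1" using l1 by auto
      fix D D' :: "real^'n" assume D: "posdiag D" and D': "posdiag D'"
      have "d_s (F D) (F D') \<le> d_s (f D) (f D')" unfolding F_def by (rule Inonexp[OF fp[OF D] fp[OF D']])
      also have "\<dots> \<le> lam_f * d_s D D'" by (rule lip[OF D D'])
      also have "\<dots> \<le> max lam_f 0 * d_s D D'"
        by (rule mult_right_mono) (use ds_nonneg[OF D D'] in auto)
      finally show "d_s (F D) (F D') \<le> max lam_f 0 * d_s D D'" .
    qed
  qed
  then obtain k where k: "0 \<le> k" "k < 1"
    and Fc: "\<And>D D'. posdiag D \<Longrightarrow> posdiag D' \<Longrightarrow> d_s (F D) (F D') \<le> k * d_s D D'" by blast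
  have "\<exists>!D. posdiag D \<and> D = F D" by (rule fixpoint[OF Fp k Fc])
  thus ?thesis unfolding F_def .
qed

end
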